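(* For every integer $j\ge 0$, $$\int_0^1\frac{\operatorname{Ti}_{2j+1}(t)}{1+t^2}\,dt=\frac12\sum_{k=0}^{2j}(-1)^k\,\beta(k+1)\,\beta(2j-k+1).$$
   Context: The inverse tangent integral of order $r\ge1$ is $\operatorname{Ti}_r(x)=\sum_{k=1}^\infty\frac{(-1)^{k-1}x^{2k-1}}{(2k-1)^r}$ for $|x|\le 1$. The Dirichlet beta function is $\beta(r)=\sum_{k=1}^\infty \frac{(-1)^{k-1}}{(2k-1)^r}=\operatorname{Ti}_r(1)$ for integers $r\ge1$. *)

theory Defs
  imports "HOL-Analysis.Analysis"
begin

text \<open>Inverse tangent integral of order r:
  Ti_r(x) = sum_{k>=1} (-1)^(k-1) x^(2k-1) / (2k-1)^r, written with index k = n+1.\<close>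
definition Ti :: "nat \<Rightarrow> real \<Rightarrow> real" where
  "Ti r x = (\<Sum>n. (-1) ^ n * x ^ (2 * n + 1) / (real (2 * n + 1)) ^ r)"

definition dbeta :: "nat \<Rightarrow> real" where
  "dbeta r = (\<Sum>n. (-1) ^ n / (real (2 * n + 1)) ^ r)"

end

theory Submission
  imports Defs
begin

lemma cont_series:
  fixes f :: "nat \<Rightarrow> real \<Rightarrow> real"
  assumes "\<And>n. continuous_on A (f n)" "\<And>n x. x \<in> A \<Longrightarrow> norm (f n x) \<le> M n" "summable M"
  shows "continuous_on A (\<lambda>x. \<Sum>n. f n x)"
  by (rule uniform_limit_theorem[OF _ Weierstrass_m_test[OF assms(2,3)]])
     (auto intro!: always_eventually allI continuous_on_sum assms(1))

lemma summable_M2: "summable (\<lambda>n. inverse (real (Suc n) ^ 2))"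
  using inverse_power_summable[of 2, where 'a=real] by (subst summable_Suc_iff) simp

lemma Ti_0 [simp]: "Ti r 0 = 0"
  by (simp add: Ti_def)

lemma Ti_1 [simp]: "Ti r 1 = dbeta r"
  by (simp add: Ti_def dbeta_def)

lemma Ti_1_arctan: "t \<in> {0..1} \<Longrightarrow> Ti 1 t = arctan t"
  using arctan_series[of t] by (simp add: Ti_def mult.commute)

lemma Ti_cont: assumes "r \<ge> 1" shows "continuous_on {0..1} (Ti r)"
proof (cases "r = 1")
  case True
  have "continuous_on {0..1} (Ti 1)"
    by (rule continuous_on_cong[THEN iffD2, OF refl Ti_1_arctan]) (auto intro!: continuous_intros)
  then show ?thesis using True by simp
next
  case False
  then have r: "r \<ge> 2" using assms by auto
  show ?thesis unfolding Ti_def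
  proof (rule cont_series[where M="\<lambda>n. inverse (real (Suc n) ^ 2)"])
    show "summable (\<lambda>n. inverse (real (Suc n) ^ 2))" by (rule summable_M2)
    fix n show "continuous_on {0..1} (\<lambda>x. (-1) ^ n * x ^ (2 * n + 1) / real (2 * n + 1) ^ r)"
      by (intro continuous_intros) auto
    fix x :: real assume x: "x \<in> {0..1}"
    have "norm ((-1) ^ n * x ^ (2 * n + 1) / real (2 * n + 1) ^ r) = x ^ (2 * n + 1) / real (2 * n + 1) ^ r"
      using x by (simp add: abs_mult power_abs)
    also have "\<dots> \<le> 1 / real (2 * n + 1) ^ r"
      using x by (intro divide_right_mono power_le_one) auto
    also have "\<dots> \<le> 1 / real (Suc n) ^ 2"
    proof -
      have "real (Suc n) ^ 2 \<le> real (2 * n + 1) ^ 2" by (intro power_mono) auto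
      also have "\<dots> \<le> real (2 * n + 1) ^ r" using r by (intro power_increasing) auto
      finally show ?thesis by (intro divide_left_mono) auto
    qed
    finally show "norm ((-1) ^ n * x ^ (2 * n + 1) / real (2 * n + 1) ^ r) \<le> inverse (real (Suc n) ^ 2)"
      by (simp add: inverse_eq_divide)
  qed
qed

definition D :: "nat \<Rightarrow> real \<Rightarrow> real" where
  "D r t = (if r = 0 then 1 / (1 + t ^ 2) else if t = 0 then 1 else Ti r t / t)"

lemma div_le_self_real: "0 \<le> (a::real) \<Longrightarrow> 1 \<le> b \<Longrightarrow> a / b \<le> a"
proof -
  assume "0 \<le> a" "1 \<le> b"
  then have "a / b \<le> a / 1" by (intro divide_left_mono) auto
  then show ?thesis by simp
qed

lemma Dser_summable:
  assumes "\<bar>t\<bar> < 1"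
  shows "summable (\<lambda>n. (-1) ^ n * t ^ (2 * n) / real (2 * n + 1) ^ r)"
proof (rule summable_comparison_test[where g="\<lambda>n. (t ^ 2) ^ n"])
  have "\<bar>t ^ 2\<bar> < 1" using assms by (simp add: abs_square_less_1)
  then show "summable (\<lambda>n. (t ^ 2) ^ n)" by (intro summable_geometric) simp
  show "\<exists>N. \<forall>n\<ge>N. norm ((-1) ^ n * t ^ (2 * n) / real (2 * n + 1) ^ r) \<le> (t ^ 2) ^ n"
  proof (intro exI allI impI)
    fix n :: nat
    have "norm ((-1) ^ n * t ^ (2 * n) / real (2 * n + 1) ^ r) = t ^ (2 * n) / real (2 * n + 1) ^ r"
      by (simp add: abs_mult power_abs power_even_abs)
    also have "\<dots> \<le> t ^ (2 * n)"
      by (rule div_le_self_real) (auto simp: power_mult zero_le_power)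
    finally show "norm ((-1) ^ n * t ^ (2 * n) / real (2 * n + 1) ^ r) \<le> (t ^ 2) ^ n"
      by (simp add: power_mult)
  qed
qed

lemma Dser:
  assumes "\<bar>t\<bar> < 1"
  shows "(\<lambda>n. (-1) ^ n * t ^ (2 * n) / real (2 * n + 1) ^ r) sums D r t"
proof -
  let ?a = "\<lambda>n. (-1) ^ n * t ^ (2 * n) / real (2 * n + 1) ^ r"
  have sa: "?a sums suminf ?a" using Dser_summable[OF assms] by (rule summable_sums)
  show ?thesis
  proof (cases "r = 0")
    case True
    have "norm (- (t ^ 2)) < 1" using assms by (simp add: abs_square_less_1)
    from geometric_sums[OF this] have "(\<lambda>n. (- (t ^ 2)) ^ n) sums (1 / (1 + t ^ 2))" by simp
    moreover have "(\<lambda>n. (- (t ^ 2)) ^ n) = ?a" using True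
      by (auto simp: fun_eq_iff power_minus[of "t ^ 2"] power_mult)
    ultimately show ?thesis using True by (simp add: D_def)
  next
    case False
    show ?thesis
    proof (cases "t = 0")
      case True
      have "?a = (\<lambda>n. if n = 0 then 1 else 0)" using True by (auto simp: fun_eq_iff)
      then show ?thesis using False True by (simp add: D_def sums_single[of 0 "\<lambda>_. 1::real", simplified])
    next
      case t: False
      have "(\<lambda>n. t * ?a n) sums (t * suminf ?a)" by (rule sums_mult[OF sa])
      moreover have "(\<lambda>n. t * ?a n) = (\<lambda>n. (-1) ^ n * t ^ (2 * n + 1) / real (2 * n + 1) ^ r)"
        by (auto simp: fun_eq_iff)
      ultimately have "Ti r t = t * suminf ?a" unfolding Ti_def by (simp add: sums_iff)
      then show ?thesis using sa False t by (simp add: D_def)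
    qed
  qed
qed

lemma Ti_deriv:
  assumes "\<bar>t\<bar> < 1"
  shows "(Ti (Suc r) has_real_derivative D r t) (at t)"
proof -
  define R where "R = (1 + \<bar>t\<bar>) / 2"
  have R: "\<bar>t\<bar> < R" "R < 1" using assms by (auto simp: R_def)
  define f where "f n x = (-1) ^ n * x ^ (2 * n + 1) / real (2 * n + 1) ^ Suc r" for n and x :: real
  define f' where "f' n x = (-1) ^ n * x ^ (2 * n) / real (2 * n + 1) ^ r" for n and x :: real
  have eq: "Ti (Suc r) = (\<lambda>x. \<Sum>n. f n x)" by (auto simp: Ti_def f_def fun_eq_iff)
  have "((\<lambda>x. \<Sum>n. f n x) has_field_derivative (\<Sum>n. f' n t)) (at t)"
  proof (rule has_field_derivative_series'(2)[of "{-R..R}" f f' "0::real" t])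
    show "convex {-R..R}" by simp
    show "0 \<in> {-R..R}" using R by auto
    show "summable (\<lambda>n. f n 0)" by (simp add: f_def)
    show "t \<in> interior {-R..R}" using R by auto
    fix n and x :: real
    show "(f n has_field_derivative f' n x) (at x within {-R..R})"
    proof -
      have "((\<lambda>x. (-1) ^ n * x ^ (2 * n + 1) / real (2 * n + 1) ^ Suc r) has_field_derivative
             (-1) ^ n * (real (2 * n + 1) * x ^ (2 * n + 1 - Suc 0)) / real (2 * n + 1) ^ Suc r) (at x within {-R..R})"
        by (intro DERIV_cdivide DERIV_cmult DERIV_pow)
      moreover have "(-1) ^ n * (real (2 * n + 1) * x ^ (2 * n + 1 - Suc 0)) / real (2 * n + 1) ^ Suc r = f' n x"
        unfolding f'_def by (simp add: divide_simps del: of_nat_Suc)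
      ultimately show ?thesis unfolding f_def by simp
    qed
  next
    show "uniformly_convergent_on {-R..R} (\<lambda>n x. \<Sum>i<n. f' i x)"
    proof (rule Weierstrass_m_test'[where M="\<lambda>n. (R ^ 2) ^ n"])
      have "\<bar>R ^ 2\<bar> < 1" using R by (simp add: abs_square_less_1)
      then show "summable (\<lambda>n. (R ^ 2) ^ n)" by (intro summable_geometric) simp
      fix n and x :: real assume x: "x \<in> {-R..R}"
      have "norm (f' n x) = \<bar>x\<bar> ^ (2 * n) / real (2 * n + 1) ^ r"
        by (simp add: f'_def abs_mult power_abs)
      also have "\<dots> \<le> \<bar>x\<bar> ^ (2 * n)"
        by (rule div_le_self_real) auto
      also have "\<dots> \<le> R ^ (2 * n)" using x by (intro power_mono) auto
      finally show "norm (f' n x) \<le> (R ^ 2) ^ n" by (simp add: power_mult)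
    qed
  qed
  moreover have "(\<Sum>n. f' n t) = D r t" using Dser[OF assms, of r] by (simp add: f'_def sums_iff)
  ultimately show ?thesis using eq by simp
qed

lemma D_cont: "continuous_on {0..1} (D r)"
proof (cases "r = 0")
  case True
  have "continuous_on {0..1} (\<lambda>t::real. 1 / (1 + t ^ 2))"
    by (intro continuous_intros) (auto, smt (verit) zero_le_power2)
  then show ?thesis using True by (simp add: D_def[abs_def])
next
  case False
  have c1: "continuous_on {0..1/2} (D r)"
  proof -
    have "continuous_on {0..1/2} (\<lambda>t. \<Sum>n. (-1) ^ n * t ^ (2 * n) / real (2 * n + 1) ^ r)"
    proof (rule cont_series[where M="\<lambda>n. (1/4) ^ n"])
      show "summable (\<lambda>n. (1/4::real) ^ n)" by (intro summable_geometric) simp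
      fix n show "continuous_on {0..1/2} (\<lambda>t::real. (-1) ^ n * t ^ (2 * n) / real (2 * n + 1) ^ r)"
        by (intro continuous_intros) auto
      fix x :: real assume x: "x \<in> {0..1/2}"
      have "norm ((-1) ^ n * x ^ (2 * n) / real (2 * n + 1) ^ r) = x ^ (2 * n) / real (2 * n + 1) ^ r"
        using x by (simp add: abs_mult power_abs)
      also have "\<dots> \<le> x ^ (2 * n)" using x by (intro div_le_self_real) auto
      also have "\<dots> \<le> (1/2) ^ (2 * n)" using x by (intro power_mono) auto
      finally show "norm ((-1) ^ n * x ^ (2 * n) / real (2 * n + 1) ^ r) \<le> (1/4) ^ n"
        by (simp add: power_mult power2_eq_square)
    qed
    moreover have "\<And>t. t \<in> {0..1/2} \<Longrightarrow> (\<Sum>n. (-1) ^ n * t ^ (2 * n) / real (2 * n + 1) ^ r) = D r t"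
      using Dser by (simp add: sums_iff)
    ultimately show ?thesis by (rule continuous_on_eq)
  qed
  have c2: "continuous_on {1/2..1} (D r)"
  proof -
    have "continuous_on {1/2..1} (Ti r)"
      using Ti_cont[of r] False by (rule_tac continuous_on_subset) auto
    then have "continuous_on {1/2..1} (\<lambda>t. Ti r t / t)"
      by (intro continuous_intros) auto
    moreover have "\<And>t. t \<in> {1/2..1} \<Longrightarrow> Ti r t / t = D r t"
      using False by (auto simp: D_def)
    ultimately show ?thesis by (rule continuous_on_eq)
  qed
  have "{0..1::real} = {0..1/2} \<union> {1/2..1}" by auto
  then show ?thesis using continuous_on_closed_Un[OF _ _ c1 c2] by simp
qed

definition J :: "nat \<Rightarrow> nat \<Rightarrow> real" where
  "J a b = integral {0..1} (\<lambda>t. Ti a t * D b t)"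

lemma J_integrable: "a \<ge> 1 \<Longrightarrow> (\<lambda>t. Ti a t * D b t) integrable_on {0..1}"
  by (intro integrable_continuous_real continuous_intros Ti_cont D_cont)

lemma J_ibp: "J (Suc b) a + J (Suc a) b = dbeta (Suc a) * dbeta (Suc b)"
proof -
  let ?h = "\<lambda>t. Ti (Suc a) t * Ti (Suc b) t"
  have "((\<lambda>t. D a t * Ti (Suc b) t + Ti (Suc a) t * D b t) has_integral (?h 1 - ?h 0)) {0..1}"
  proof (rule fundamental_theorem_of_calculus_interior)
    show "continuous_on {0..1} ?h" by (intro continuous_intros Ti_cont) auto
    fix x :: real assume x: "x \<in> {0<..<1}"
    then have "\<bar>x\<bar> < 1" by auto
    then have "(?h has_real_derivative (D a x * Ti (Suc b) x + Ti (Suc a) x * D b x)) (at x)"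
      using DERIV_mult[OF Ti_deriv[of x a] Ti_deriv[of x b]] by (simp add: mult.commute)
    then show "(?h has_vector_derivative (D a x * Ti (Suc b) x + Ti (Suc a) x * D b x)) (at x)"
      by (simp add: has_real_derivative_iff_has_vector_derivative)
  qed simp
  then have "integral {0..1} (\<lambda>t. D a t * Ti (Suc b) t + Ti (Suc a) t * D b t) = dbeta (Suc a) * dbeta (Suc b)"
    by (simp add: integral_unique)
  moreover have "integral {0..1} (\<lambda>t. D a t * Ti (Suc b) t + Ti (Suc a) t * D b t)
       = J (Suc b) a + J (Suc a) b"
    unfolding J_def
    using integral_add[OF J_integrable[of "Suc b" a] J_integrable[of "Suc a" b]] by (simp add: mult.commute)
  ultimately show ?thesis by simp
qed

lemma J_sym: "a \<ge> 1 \<Longrightarrow> b \<ge> 1 \<Longrightarrow> J a b = J b a"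
  unfolding J_def by (intro integral_cong) (auto simp: D_def)


lemma J_step:
  assumes "m < n"
  shows "J (n - m + 1) m = dbeta (n - m + 1) * dbeta (m + 1) - J (n - (m + 1) + 1) (m + 1)"
proof -
  have "J (Suc m) (n - m) + J (Suc (n - m)) m = dbeta (Suc (n - m)) * dbeta (Suc m)"
    by (rule J_ibp)
  moreover have "J (Suc m) (n - m) = J (n - m) (Suc m)" using assms by (intro J_sym) auto
  moreover have "n - (m + 1) + 1 = n - m" using assms by simp
  ultimately show ?thesis by simp
qed

lemma J_telescope:
  assumes "m \<le> n"
  shows "J (n + 1) 0 = (\<Sum>k<m. (-1) ^ k * dbeta (k + 1) * dbeta (n - k + 1)) + (-1) ^ m * J (n - m + 1) m"
  using assms
proof (induction m)
  case 0
  then show ?case by simp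
next
  case (Suc m)
  then have IH: "J (n + 1) 0 = (\<Sum>k<m. (-1) ^ k * dbeta (k + 1) * dbeta (n - k + 1)) + (-1) ^ m * J (n - m + 1) m"
    and mn: "m < n" by auto
  show ?case
    unfolding IH J_step[OF mn] by (simp add: algebra_simps)
qed

theorem lemma2:
  fixes j :: nat
  shows "integral {0..1} (\<lambda>t. Ti (2 * j + 1) t / (1 + t ^ 2)) =
         (1 / 2) * (\<Sum>k = 0..2 * j. (-1) ^ k * dbeta (k + 1) * dbeta (2 * j - k + 1))"
proof -
  define n where "n = 2 * j"
  have ev: "even n" by (simp add: n_def)
  have lhs: "integral {0..1} (\<lambda>t. Ti (2 * j + 1) t / (1 + t ^ 2)) = J (n + 1) 0"
    by (simp add: J_def D_def n_def)
  have tel: "J (n + 1) 0 = (\<Sum>k<n. (-1) ^ k * dbeta (k + 1) * dbeta (n - k + 1)) + J 1 n"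
    using J_telescope[of n n] ev by simp
  have ibp: "J 1 n + J (n + 1) 0 = dbeta (n + 1) * dbeta 1"
    using J_ibp[of 0 n] by simp
  have "(\<Sum>k = 0..n. (-1) ^ k * dbeta (k + 1) * dbeta (n - k + 1))
      = (\<Sum>k<n. (-1) ^ k * dbeta (k + 1) * dbeta (n - k + 1)) + dbeta (n + 1) * dbeta 1"
    using ev by (simp add: atLeast0AtMost lessThan_Suc_atMost[symmetric])
  then show ?thesis using lhs tel ibp by (simp add: n_def)
qed

end
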